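(* If $S\subseteq\{0,1,2\}^m$ and $T\subseteq\{0,1,2\}^{m'}$ are admissible sets, then their direct product $S\times T=\{(s,t): s\in S,t\in T\}\subseteq\{0,1,2\}^{m+m'}$ (with $(s,t)$ the concatenation of $s$ and $t$) is an admissible set.
   Context: A set $S\subseteq\{0,1,2\}^m$ is admissible if (1) for all distinct $s,s'\in S$ there are coordinates $i,j$ with $s_i=0\neq s'_i$ and $s_j\neq 0=s'_j$; and (2) for all distinct $s,s',s''\in S$ there is a coordinate $k$ such that the multiset $\{s_k,s'_k,s''_k\}$ equals $\{0,1,2\}$, $\{0,0,1\}$ or $\{0,0,2\}$. *)

theory Defs
  imports Main "HOL-Library.Multiset"
begin

text \<open>Words in {0,1,2}^m are represented as lists of naturals of length m with entries < 3.\<close>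

definition ternary_words :: "nat \<Rightarrow> nat list set" where
  "ternary_words m = {s. length s = m \<and> (\<forall>i<m. s ! i < 3)}"

definition admissible :: "nat \<Rightarrow> nat list set \<Rightarrow> bool" where
  "admissible m S \<longleftrightarrow> S \<subseteq> ternary_words m \<and>
     (\<forall>s\<in>S. \<forall>s'\<in>S. s \<noteq> s' \<longrightarrow>
        (\<exists>i<m. \<exists>j<m. s ! i = 0 \<and> s' ! i \<noteq> 0 \<and> s ! j \<noteq> 0 \<and> s' ! j = 0)) \<and>
     (\<forall>s\<in>S. \<forall>s'\<in>S. \<forall>s''\<in>S. s \<noteq> s' \<and> s \<noteq> s'' \<and> s' \<noteq> s'' \<longrightarrow>
        (\<exists>k<m. {# s ! k, s' ! k, s'' ! k #} \<in> {{#0, 1, 2#}, {#0, 0, 1#}, {#0, 0, 2#}}))"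

definition direct_product :: "nat list set \<Rightarrow> nat list set \<Rightarrow> nat list set" where
  "direct_product S T = {s @ t | s t. s \<in> S \<and> t \<in> T}"

end

theory Submission
  imports Defs
begin

definition PP :: "nat \<Rightarrow> nat list \<Rightarrow> nat list \<Rightarrow> nat list \<Rightarrow> bool" where
  "PP n x y z \<longleftrightarrow> (\<exists>k<n. {# x ! k, y ! k, z ! k #} \<in> {{#0, 1, 2#}, {#0, 0, 1#}, {#0, 0, 2#}})"

lemma PP_swap1: "PP n x y z \<Longrightarrow> PP n y x z"
proof -
  assume "PP n x y z"
  then obtain k where k: "k < n" "{# x ! k, y ! k, z ! k #} \<in> {{#0, 1, 2#}, {#0, 0, 1#}, {#0, 0, 2#}}"
    unfolding PP_def by blast
  have "{# y ! k, x ! k, z ! k #} = {# x ! k, y ! k, z ! k #}" by (simp add: add_mset_commute)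
  then show ?thesis unfolding PP_def using k by metis
qed

lemma PP_swap2: "PP n x y z \<Longrightarrow> PP n x z y"
proof -
  assume "PP n x y z"
  then obtain k where k: "k < n" "{# x ! k, y ! k, z ! k #} \<in> {{#0, 1, 2#}, {#0, 0, 1#}, {#0, 0, 2#}}"
    unfolding PP_def by blast
  have "{# x ! k, z ! k, y ! k #} = {# x ! k, y ! k, z ! k #}" by (simp add: add_mset_commute)
  then show ?thesis unfolding PP_def using k by metis
qed

lemma dp: "x \<in> direct_product S T \<Longrightarrow> \<exists>s t. x = s @ t \<and> s \<in> S \<and> t \<in> T"
  unfolding direct_product_def by simp

lemma key:
  assumes T: "admissible m' T" and t1: "t1 \<in> T" and t2: "t2 \<in> T" and ne: "t1 \<noteq> t2"
    and ls: "length s = m" and ls3: "length s3 = m"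
  shows "PP (m + m') (s @ t1) (s @ t2) (s3 @ t1)"
proof -
  have T1: "\<forall>s\<in>T. \<forall>s'\<in>T. s \<noteq> s' \<longrightarrow>
        (\<exists>i<m'. \<exists>j<m'. s ! i = 0 \<and> s' ! i \<noteq> 0 \<and> s ! j \<noteq> 0 \<and> s' ! j = 0)"
    using T unfolding admissible_def by auto
  obtain i where i: "i < m'" "t1 ! i = 0" "t2 ! i \<noteq> 0"
    using T1[rule_format, OF t1 t2 ne] by blast
  have "T \<subseteq> ternary_words m'" using T unfolding admissible_def by auto
  then have "t2 \<in> ternary_words m'" using t2 by blast
  then have "t2 ! i < 3" using i unfolding ternary_words_def by auto
  then have "t2 ! i = 1 \<or> t2 ! i = 2" using i by auto
  moreover have "(s @ t1) ! (m+i) = t1 ! i" "(s @ t2) ! (m+i) = t2 ! i" "(s3 @ t1) ! (m+i) = t1 ! i"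
    using ls ls3 by (auto simp: nth_append)
  ultimately show ?thesis unfolding PP_def using i
    by (intro exI[of _ "m+i"]) (auto simp: add_mset_commute)
qed

theorem proposition3p1:
  fixes m m' :: nat and S T :: "nat list set"
  assumes "admissible m S" and "admissible m' T"
  shows "admissible (m + m') (direct_product S T)"
proof -
  have SW: "\<And>s. s \<in> S \<Longrightarrow> length s = m \<and> (\<forall>i<m. s ! i < 3)"
  proof -
    have "S \<subseteq> ternary_words m" using assms(1) unfolding admissible_def by auto
    then show "\<And>s. s \<in> S \<Longrightarrow> length s = m \<and> (\<forall>i<m. s ! i < 3)" unfolding ternary_words_def by auto
  qed
  have TW: "\<And>s. s \<in> T \<Longrightarrow> length s = m' \<and> (\<forall>i<m'. s ! i < 3)"
  proof -
    have "T \<subseteq> ternary_words m'" using assms(2) unfolding admissible_def by auto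
    then show "\<And>s. s \<in> T \<Longrightarrow> length s = m' \<and> (\<forall>i<m'. s ! i < 3)" unfolding ternary_words_def by auto
  qed
  have S1: "\<forall>s\<in>S. \<forall>s'\<in>S. s \<noteq> s' \<longrightarrow>
        (\<exists>i<m. \<exists>j<m. s ! i = 0 \<and> s' ! i \<noteq> 0 \<and> s ! j \<noteq> 0 \<and> s' ! j = 0)"
   and S2: "\<forall>s\<in>S. \<forall>s'\<in>S. \<forall>s''\<in>S. s \<noteq> s' \<and> s \<noteq> s'' \<and> s' \<noteq> s'' \<longrightarrow>
        (\<exists>k<m. {# s ! k, s' ! k, s'' ! k #} \<in> {{#0, 1, 2#}, {#0, 0, 1#}, {#0, 0, 2#}})"
    using assms(1) unfolding admissible_def by auto
  have T1: "\<forall>s\<in>T. \<forall>s'\<in>T. s \<noteq> s' \<longrightarrow>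
        (\<exists>i<m'. \<exists>j<m'. s ! i = 0 \<and> s' ! i \<noteq> 0 \<and> s ! j \<noteq> 0 \<and> s' ! j = 0)"
   and T2: "\<forall>s\<in>T. \<forall>s'\<in>T. \<forall>s''\<in>T. s \<noteq> s' \<and> s \<noteq> s'' \<and> s' \<noteq> s'' \<longrightarrow>
        (\<exists>k<m'. {# s ! k, s' ! k, s'' ! k #} \<in> {{#0, 1, 2#}, {#0, 0, 1#}, {#0, 0, 2#}})"
    using assms(2) unfolding admissible_def by auto
  have L: "\<And>s t k. length s = m \<Longrightarrow> k < m \<Longrightarrow> (s @ t) ! k = s ! k" by (simp add: nth_append)
  have R: "\<And>s t k. length s = m \<Longrightarrow> (s @ t) ! (m + k) = t ! k" by (simp add: nth_append)
  have A: "direct_product S T \<subseteq> ternary_words (m + m')"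
  proof
    fix x assume "x \<in> direct_product S T"
    then obtain s t where x: "x = s @ t" "s \<in> S" "t \<in> T" unfolding direct_product_def by blast
    show "x \<in> ternary_words (m + m')" unfolding ternary_words_def
    proof (intro CollectI conjI allI impI)
      show "length x = m + m'" using x SW TW by auto
      fix i assume "i < m + m'"
      then show "x ! i < 3" using x SW TW by (auto simp: nth_append)
    qed
  qed
  have B: "\<exists>i<m+m'. \<exists>j<m+m'. x ! i = 0 \<and> y ! i \<noteq> 0 \<and> x ! j \<noteq> 0 \<and> y ! j = 0"
    if H: "x \<in> direct_product S T" "y \<in> direct_product S T" "x \<noteq> y" for x y
  proof -
    obtain s t where x: "x = s @ t" "s \<in> S" "t \<in> T" using dp[OF H(1)] by blast
    obtain s' t' where y: "y = s' @ t'" "s' \<in> S" "t' \<in> T" using dp[OF H(2)] by blast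
    have ls: "length s = m" "length s' = m" using x y SW by auto
    show ?thesis
    proof (cases "s = s'")
      case False
      then obtain i j where "i<m" "j<m" "s ! i = 0" "s' ! i \<noteq> 0" "s ! j \<noteq> 0" "s' ! j = 0"
        using S1[rule_format, OF x(2) y(2) False] by blast
      then show ?thesis using x y ls
        by (intro exI[of _ i] conjI exI[of _ j]) (simp_all add: nth_append)
    next
      case True
      then have "t \<noteq> t'" using x y H(3) by auto
      then obtain i j where "i<m'" "j<m'" "t ! i = 0" "t' ! i \<noteq> 0" "t ! j \<noteq> 0" "t' ! j = 0"
        using T1[rule_format, OF x(3) y(3) \<open>t \<noteq> t'\<close>] by blast
      then show ?thesis using x y ls
        by (intro exI[of _ "m+i"] conjI exI[of _ "m+j"]) (simp_all add: nth_append)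
    qed
  qed
  have C: "PP (m+m') x y z"
    if H: "x \<in> direct_product S T" "y \<in> direct_product S T" "z \<in> direct_product S T"
       "x \<noteq> y" "x \<noteq> z" "y \<noteq> z" for x y z
  proof -
    obtain s1 t1 where x: "x = s1 @ t1" "s1 \<in> S" "t1 \<in> T" using dp[OF H(1)] by blast
    obtain s2 t2 where y: "y = s2 @ t2" "s2 \<in> S" "t2 \<in> T" using dp[OF H(2)] by blast
    obtain s3 t3 where z: "z = s3 @ t3" "s3 \<in> S" "t3 \<in> T" using dp[OF H(3)] by blast
    have ls: "length s1 = m" "length s2 = m" "length s3 = m" using x y z SW by auto
    have h12: "s1 \<noteq> s2 \<or> t1 \<noteq> t2" using H(4) x y by auto
    have h13: "s1 \<noteq> s3 \<or> t1 \<noteq> t3" using H(5) x z by auto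
    have h23: "s2 \<noteq> s3 \<or> t2 \<noteq> t3" using H(6) y z by auto
    have D: "(s1 \<noteq> s2 \<and> s1 \<noteq> s3 \<and> s2 \<noteq> s3) \<or> (t1 \<noteq> t2 \<and> t1 \<noteq> t3 \<and> t2 \<noteq> t3)
      \<or> (s1 = s2 \<and> t3 = t1) \<or> (s1 = s2 \<and> t3 = t2) \<or> (s1 = s3 \<and> t2 = t1) \<or> (s1 = s3 \<and> t2 = t3)
      \<or> (s2 = s3 \<and> t1 = t2) \<or> (s2 = s3 \<and> t1 = t3)"
      using h12 h13 h23
      by (cases "s1=s2"; cases "s1=s3"; cases "s2=s3"; cases "t1=t2"; cases "t1=t3"; cases "t2=t3"; simp)
    consider "s1 \<noteq> s2 \<and> s1 \<noteq> s3 \<and> s2 \<noteq> s3" | "t1 \<noteq> t2 \<and> t1 \<noteq> t3 \<and> t2 \<noteq> t3"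
      | "s1 = s2" "t3 = t1" | "s1 = s2" "t3 = t2" | "s1 = s3" "t2 = t1" | "s1 = s3" "t2 = t3"
      | "s2 = s3" "t1 = t2" | "s2 = s3" "t1 = t3"
      using D by blast
    then show ?thesis
    proof cases
      case 1
      then have "s1 \<noteq> s2 \<and> s1 \<noteq> s3 \<and> s2 \<noteq> s3" by simp
      then obtain k where "k<m" "{# s1 ! k, s2 ! k, s3 ! k #} \<in> {{#0, 1, 2#}, {#0, 0, 1#}, {#0, 0, 2#}}"
        using S2[rule_format, OF x(2) y(2) z(2)] by blast
      then show ?thesis unfolding PP_def using x y z ls
        by (intro exI[of _ k]) (simp add: nth_append)
    next
      case 2
      then have "t1 \<noteq> t2 \<and> t1 \<noteq> t3 \<and> t2 \<noteq> t3" by simp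
      then obtain k where "k<m'" "{# t1 ! k, t2 ! k, t3 ! k #} \<in> {{#0, 1, 2#}, {#0, 0, 1#}, {#0, 0, 2#}}"
        using T2[rule_format, OF x(3) y(3) z(3)] by blast
      then show ?thesis unfolding PP_def using x y z ls
        by (intro exI[of _ "m+k"]) (simp add: nth_append)
    next
      case 3
      then have "t1 \<noteq> t2" using H x y by auto
      from key[OF assms(2) x(3) y(3) this ls(1) ls(3)] show ?thesis using 3 x y z by simp
    next
      case 4
      then have "t2 \<noteq> t1" using H x y by auto
      from key[OF assms(2) y(3) x(3) this ls(2) ls(3)] show ?thesis using 4 x y z
        by (simp add: PP_swap1)
    next
      case 5
      then have "t1 \<noteq> t3" using H x z by auto
      from key[OF assms(2) x(3) z(3) this ls(1) ls(2)] show ?thesis using 5 x y z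
        by (simp add: PP_swap2)
    next
      case 6
      then have "t3 \<noteq> t1" using H x z by auto
      from key[OF assms(2) z(3) x(3) this ls(3) ls(2)] have "PP (m+m') z x y" using 6 x y z by simp
      then show ?thesis by (meson PP_swap1 PP_swap2)
    next
      case 7
      then have "t2 \<noteq> t3" using H y z by auto
      from key[OF assms(2) y(3) z(3) this ls(2) ls(1)] have "PP (m+m') y z x" using 7 x y z by simp
      then show ?thesis by (meson PP_swap1 PP_swap2)
    next
      case 8
      then have "t3 \<noteq> t2" using H y z by auto
      from key[OF assms(2) z(3) y(3) this ls(3) ls(1)] have "PP (m+m') z y x" using 8 x y z by simp
      then show ?thesis by (meson PP_swap1 PP_swap2)
    qed
  qed
  show ?thesis unfolding admissible_def
  proof (intro conjI ballI impI)
    show "direct_product S T \<subseteq> ternary_words (m + m')" by (rule A)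
  next
    fix x y assume "x \<in> direct_product S T" "y \<in> direct_product S T" "x \<noteq> y"
    then show "\<exists>i<m+m'. \<exists>j<m+m'. x ! i = 0 \<and> y ! i \<noteq> 0 \<and> x ! j \<noteq> 0 \<and> y ! j = 0" by (rule B)
  next
    fix x y z assume "x \<in> direct_product S T" "y \<in> direct_product S T" "z \<in> direct_product S T"
      "x \<noteq> y \<and> x \<noteq> z \<and> y \<noteq> z"
    then have "PP (m+m') x y z" using C by blast
    then show "\<exists>k<m+m'. {# x ! k, y ! k, z ! k #} \<in> {{#0, 1, 2#}, {#0, 0, 1#}, {#0, 0, 2#}}"
      unfolding PP_def .
  qed
qed

end
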